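(* Assume $\zeta_{\tilde u}=\zeta_u$ and $\mu\ge4$ (even). Then $\alpha_{\mathrm I}$ first-order stochastically dominates $Y_{\tilde u}$: $F_{\alpha_{\mathrm I}}(y)\le F_{Y_{\tilde u}}(y)$ for all $y\in\mathbb R$, with strict inequality for some $y$. (For $\mu=2$, $\alpha_{\mathrm I}$ and $Y_{\tilde u}$ have the same distribution.)
   Context: Setup: Let $W\ge 1$ be an integer and $\mu\ge 2$ an even integer, set $K=\mu W+1$. Let $\psi_u,\psi_{\tilde u}$ be independent uniform on $(0,2\pi)$ and $\zeta_u,\zeta_{\tilde u}>0$. For $k=1,\dots,K$ let $h_{u,k}=\zeta_u^{1/2}e^{j(\psi_u+2\pi(k-1)/\mu)}$ and $h_{\tilde u,k}=\zeta_{\tilde u}^{1/2}e^{j(\psi_{\tilde u}+2\pi(k-1)/\mu)}$, $j=\sqrt{-1}$. Let $\mathcal K_1=\{k\in\{2,\dots,K\}:\operatorname{Re}(h_{u,k})>0\}$, $\alpha_{\mathrm I}=\big(\sum_{k\in\mathcal K_1}\operatorname{Re}(h_{u,k})\big)^2$, $Y_{\tilde u}=\big(\sum_{k\in\mathcal K_1}\operatorname{Re}(h_{\tilde u,k})\big)^2$. $F_X$ denotes the CDF of $X$. *)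

theory Defs
  imports "HOL-Probability.Probability"
begin

definition chan :: "real \<Rightarrow> real \<Rightarrow> nat \<Rightarrow> nat \<Rightarrow> complex" where
  "chan zeta psi mu k = complex_of_real (sqrt zeta) * cis (psi + 2 * pi * (real k - 1) / real mu)"

definition Kone :: "nat \<Rightarrow> nat \<Rightarrow> real \<Rightarrow> real \<Rightarrow> nat set" where
  "Kone W mu zeta_u psi_u = {k \<in> {2 .. mu * W + 1}. Re (chan zeta_u psi_u mu k) > 0}"

definition alphaI :: "nat \<Rightarrow> nat \<Rightarrow> real \<Rightarrow> real \<Rightarrow> real" where
  "alphaI W mu zeta_u psi_u = (\<Sum>k\<in>Kone W mu zeta_u psi_u. Re (chan zeta_u psi_u mu k))\<^sup>2"

definition Ytil :: "nat \<Rightarrow> nat \<Rightarrow> real \<Rightarrow> real \<Rightarrow> real \<Rightarrow> real \<Rightarrow> real" where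
  "Ytil W mu zeta_u zeta_t psi_u psi_t =
     (\<Sum>k\<in>Kone W mu zeta_u psi_u. Re (chan zeta_t psi_t mu k))\<^sup>2"

text \<open>Joint law of (psi_u, psi_tilde_u): independent, each uniform on (0, 2 pi).\<close>
definition phase_space :: "(real \<times> real) measure" where
  "phase_space = uniform_measure lborel {0<..<2*pi} \<Otimes>\<^sub>M uniform_measure lborel {0<..<2*pi}"

definition cdf_ps :: "(real \<times> real \<Rightarrow> real) \<Rightarrow> real \<Rightarrow> real" where
  "cdf_ps X y = measure phase_space {\<omega> \<in> space phase_space. X \<omega> \<le> y}"

end

theory Submission
  imports Defs
begin


definition cc :: "nat \<Rightarrow> real \<Rightarrow> nat \<Rightarrow> real" where
  "cc mu p k = cos (p + 2 * pi * (real k - 1) / real mu)"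

definition SS :: "nat \<Rightarrow> nat \<Rightarrow> real \<Rightarrow> real \<Rightarrow> real" where
  "SS W mu p t = (\<Sum>k\<in>{k\<in>{2..mu*W+1}. cc mu p k > 0}. cc mu t k)"

lemma Re_chan: "Re (chan z p mu k) = sqrt z * cc mu p k"
  by (simp add: chan_def cc_def)

lemma Kone_eq: "z > 0 \<Longrightarrow> Kone W mu z p = {k\<in>{2..mu*W+1}. cc mu p k > 0}"
  by (auto simp: Kone_def Re_chan zero_less_mult_iff)

lemma alphaI_eq: "z > 0 \<Longrightarrow> alphaI W mu z p = z * (SS W mu p p)\<^sup>2"
  by (simp add: alphaI_def Kone_eq Re_chan SS_def sum_distrib_left[symmetric] power_mult_distrib)

lemma Ytil_eq: "z > 0 \<Longrightarrow> Ytil W mu z z p t = z * (SS W mu p t)\<^sup>2"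
  by (simp add: Ytil_def Kone_eq Re_chan SS_def sum_distrib_left[symmetric] power_mult_distrib)

lemma SS_alt: "SS W mu p t = (\<Sum>k\<in>{2..mu*W+1}. if cc mu p k > 0 then cc mu t k else 0)"
  unfolding SS_def by (rule sum.inter_filter) simp

lemma cos_lip: "\<bar>cos (a::real) - cos b\<bar> \<le> \<bar>a - b\<bar>"
proof -
  have "\<bar>cos a - cos b\<bar> = 2 * \<bar>sin ((a + b) / 2)\<bar> * \<bar>sin ((b - a) / 2)\<bar>"
    by (simp add: cos_diff_cos abs_mult)
  also have "\<dots> \<le> 2 * 1 * \<bar>(b - a) / 2\<bar>"
    by (intro mult_mono abs_sin_x_le_abs_x) auto
  finally show ?thesis by simp
qed

definition sig :: "nat \<Rightarrow> nat \<Rightarrow> nat \<Rightarrow> nat" where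
  "sig W mu k = (if k + mu div 2 \<le> mu*W+1 then k + mu div 2 else k + mu div 2 - mu*W)"

lemma sig_in:
  assumes "W \<ge> 1" "k \<in> {2..mu*W+1}"
  shows "sig W mu k \<in> {2..mu*W+1}"
proof -
  have "mu div 2 \<le> mu * W" using assms(1) by (metis div_le_dividend le_trans mult_le_mono2 mult_1_right)
  then show ?thesis using assms by (auto simp: sig_def)
qed

lemma sig_inj:
  assumes "W \<ge> 1"
  shows "inj_on (sig W mu) {2..mu*W+1}"
  unfolding inj_on_def sig_def by auto

lemma cc_sig:
  assumes "W \<ge> 1" "even mu" "mu \<ge> 2" "k \<in> {2..mu*W+1}"
  shows "cc mu t (sig W mu k) = - cc mu t k"
proof -
  have mu: "real (mu div 2) * 2 = real mu" using assms(2) by auto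
  have "mu > 0" using assms by auto
  have e1: "2 * pi * (real (k + mu div 2) - 1) / real mu = 2 * pi * (real k - 1) / real mu + pi"
    using mu \<open>mu > 0\<close> by (simp add: field_simps)
  show ?thesis
  proof (cases "k + mu div 2 \<le> mu*W+1")
    case True
    then show ?thesis unfolding cc_def sig_def using e1
      by (simp add: add.assoc[symmetric] cos_periodic_pi)
  next
    case False
    obtain m where m: "mu = 2 * m" using assms(2) by blast
    have r: "real (k + mu div 2 - mu*W) = real k + real m - 2 * real m * real W"
      using False m by (simp add: of_nat_diff)
    have "m > 0" using m \<open>mu > 0\<close> by simp
    then have e2: "t + 2 * pi * (real (k + mu div 2 - mu*W) - 1) / real mu
       = (t + 2 * pi * (real k - 1) / real mu + pi) - 2 * pi * real W"
      unfolding r using m by (simp add: field_simps)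
    have "cos ((t + 2 * pi * (real k - 1) / real mu + pi) - 2 * pi * real W)
        = cos (t + 2 * pi * (real k - 1) / real mu + pi)"
      using cos_int_2pin[of "int W"] sin_int_2pin[of "int W"] by (simp add: cos_diff)
    have "cc mu t (sig W mu k) = cos (t + 2*pi*(real (k + mu div 2 - mu*W) - 1)/real mu)"
      using False by (simp add: cc_def sig_def)
    also have "\<dots> = cos ((t + 2 * pi * (real k - 1) / real mu + pi) - 2 * pi * real W)"
      by (simp only: e2)
    also have "\<dots> = cos (t + 2 * pi * (real k - 1) / real mu + pi)" by fact
    also have "\<dots> = - cc mu t k" by (simp add: cos_periodic_pi cc_def)
    finally show ?thesis .
  qed
qed

lemma key_bound:
  assumes "W \<ge> 1" "even mu" "mu \<ge> 2"
  shows "(SS W mu p t)\<^sup>2 \<le> (SS W mu t t)\<^sup>2"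
proof -
  let ?I = "{2..mu*W+1}"
  let ?T = "{k\<in>?I. cc mu p k > 0}"
  let ?P = "\<Sum>k\<in>?I. max (cc mu t k) 0"
  have P: "SS W mu t t = ?P"
    unfolding SS_alt by (rule sum.cong) auto
  have upper: "sum (cc mu t) A \<le> ?P" if "A \<subseteq> ?I" for A
  proof -
    have "sum (cc mu t) A \<le> (\<Sum>k\<in>A. max (cc mu t k) 0)" by (intro sum_mono) auto
    also have "\<dots> \<le> ?P" by (rule sum_mono2) (use that in auto)
    finally show ?thesis .
  qed
  have s1: "SS W mu p t \<le> ?P" unfolding SS_def by (rule upper) auto
  have "- SS W mu p t = (\<Sum>k\<in>?T. cc mu t (sig W mu k))"
    unfolding SS_def sum_negf[symmetric] by (rule sum.cong) (use cc_sig assms in auto)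
  also have "\<dots> = sum (cc mu t) (sig W mu ` ?T)"
    by (rule sum.reindex[symmetric, unfolded comp_def]) (rule inj_on_subset[OF sig_inj[OF assms(1)]], auto)
  also have "\<dots> \<le> ?P" by (rule upper) (use sig_in assms in auto)
  finally have s2: "- SS W mu p t \<le> ?P" .
  have "\<bar>SS W mu p t\<bar> \<le> ?P" using s1 s2 by auto
  then show ?thesis unfolding P by (metis abs_ge_zero abs_le_square_iff abs_of_nonneg order_trans)
qed


abbreviation U :: "real measure" where "U \<equiv> uniform_measure lborel {0<..<2*pi}"

lemma U_prob: "prob_space U"
  by (rule prob_space_uniform_measure) auto

lemma space_U[simp]: "space U = UNIV" by simp
lemma sets_U[simp]: "sets U = sets borel" by simp

lemma pps: "pair_prob_space U U"
  using U_prob by (simp add: pair_prob_space_def pair_sigma_finite_def prob_space_imp_sigma_finite)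

lemma ps_prob: "prob_space phase_space"
  unfolding phase_space_def by (rule prob_space_pair[OF U_prob U_prob])

lemma space_ps[simp]: "space phase_space = UNIV"
  by (simp add: phase_space_def space_pair_measure)

lemma sets_ps: "sets phase_space = sets (borel \<Otimes>\<^sub>M borel)"
  unfolding phase_space_def by (intro sets_pair_measure_cong) auto

lemma em_rect: "A \<in> sets borel \<Longrightarrow> B \<in> sets borel \<Longrightarrow>
   emeasure phase_space (A \<times> B) = emeasure U A * emeasure U B"
  unfolding phase_space_def
  by (rule sigma_finite_measure.emeasure_pair_measure_Times) (auto intro: prob_space_imp_sigma_finite U_prob)

lemma meas_fst: "A \<in> sets borel \<Longrightarrow> measure phase_space (A \<times> UNIV) = measure U A"
proof -
  assume A: "A \<in> sets borel"
  have "emeasure U UNIV = 1" using prob_space.emeasure_space_1[OF U_prob] by simp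
  then have "emeasure phase_space (A \<times> UNIV) = emeasure U A" using em_rect[OF A] by simp
  then show ?thesis by (simp add: measure_def)
qed

lemma meas_snd: "A \<in> sets borel \<Longrightarrow> measure phase_space (UNIV \<times> A) = measure U A"
proof -
  assume A: "A \<in> sets borel"
  have "emeasure U UNIV = 1" using prob_space.emeasure_space_1[OF U_prob] by simp
  then have "emeasure phase_space (UNIV \<times> A) = emeasure U A" using em_rect[OF _ A] by simp
  then show ?thesis by (simp add: measure_def)
qed

lemma SS_meas: "(\<lambda>\<omega>. SS W mu (fst \<omega>) (snd \<omega>)) \<in> borel_measurable (borel \<Otimes>\<^sub>M borel)"
  unfolding SS_alt cc_def by measurable

lemma SS_meas1: "(\<lambda>p. SS W mu p p) \<in> borel_measurable borel"
  unfolding SS_alt cc_def by measurable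


lemma set_ps_meas: "{\<omega>. z * (SS W mu (fst \<omega>) (snd \<omega>))\<^sup>2 \<le> y} \<in> sets phase_space"
proof -
  have "{\<omega> \<in> space (borel \<Otimes>\<^sub>M borel). z * (SS W mu (fst \<omega>) (snd \<omega>))\<^sup>2 \<le> y} \<in> sets (borel \<Otimes>\<^sub>M borel)"
    unfolding SS_alt cc_def by measurable
  then show ?thesis unfolding sets_ps by (simp add: space_pair_measure)
qed

lemma set_1_meas: "{p. z * (SS W mu p p)\<^sup>2 \<le> y} \<in> sets borel"
  unfolding SS_alt cc_def by measurable

lemma cdf_alpha: "z > 0 \<Longrightarrow> cdf_ps (\<lambda>\<omega>. alphaI W mu z (fst \<omega>)) y
    = measure phase_space (UNIV \<times> {p. z * (SS W mu p p)\<^sup>2 \<le> y})"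
proof -
  assume z: "z > 0"
  have "{\<omega> \<in> space phase_space. alphaI W mu z (fst \<omega>) \<le> y} = {p. z * (SS W mu p p)\<^sup>2 \<le> y} \<times> UNIV"
    using z by (auto simp: alphaI_eq)
  then show ?thesis unfolding cdf_ps_def using meas_fst[OF set_1_meas] meas_snd[OF set_1_meas] by simp
qed

lemma cdf_Y: "z > 0 \<Longrightarrow> cdf_ps (\<lambda>\<omega>. Ytil W mu z z (fst \<omega>) (snd \<omega>)) y
    = measure phase_space {\<omega>. z * (SS W mu (fst \<omega>) (snd \<omega>))\<^sup>2 \<le> y}"
  unfolding cdf_ps_def by (simp add: Ytil_eq)

lemma weak:
  assumes "W \<ge> 1" "even mu" "mu \<ge> 2" "z > 0"
  shows "cdf_ps (\<lambda>\<omega>. alphaI W mu z (fst \<omega>)) y \<le> cdf_ps (\<lambda>\<omega>. Ytil W mu z z (fst \<omega>) (snd \<omega>)) y"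
  unfolding cdf_alpha[OF assms(4)] cdf_Y[OF assms(4)]
proof (rule finite_measure.finite_measure_mono[OF prob_space.axioms(1)[OF ps_prob] _ set_ps_meas])
  have kb: "z * (SS W mu a b)\<^sup>2 \<le> z * (SS W mu b b)\<^sup>2" for a b
    using key_bound[OF assms(1-3)] assms(4) by (simp add: mult_left_mono)
  show "UNIV \<times> {p. z * (SS W mu p p)\<^sup>2 \<le> y} \<subseteq> {\<omega>. z * (SS W mu (fst \<omega>) (snd \<omega>))\<^sup>2 \<le> y}"
    using kb order_trans by fastforce
qed

lemma lower:
  assumes "W \<ge> 1" "even mu" "mu \<ge> 4"
  shows "SS W mu p p \<ge> 1/2"
proof -
  have mu0: "real mu > 0" using assms by simp
  define x where "x = p * real mu / (2*pi)"
  define j where "j = round x"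
  define m where "m = (-j-1) mod int mu + 1"
  define q where "q = - ((-j-1) div int mu)"
  have mpos: "0 < int mu" using assms by simp
  have m1: "1 \<le> m" "m \<le> int mu" using pos_mod_bound[OF mpos, of "-j-1"] pos_mod_sign[OF mpos, of "-j-1"]
    unfolding m_def by auto
  have h: "(-j-1) div int mu * int mu + (-j-1) mod int mu = -j-1" by (rule div_mult_mod_eq)
  have h2: "int mu * q = - ((-j-1) div int mu * int mu)" unfolding q_def by simp
  have mq: "m + j = int mu * q" unfolding h2 m_def using h by linarith
  define k where "k = nat m + 1"
  have kI: "k \<in> {2..mu*W+1}"
  proof -
    have "mu \<le> mu * W" using assms by simp
    moreover have "nat m \<le> mu" using m1 by (simp add: nat_le_iff)
    ultimately have "nat m \<le> mu * W" by linarith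
    then show ?thesis using m1 unfolding k_def by auto
  qed
  have rk: "real k - 1 = real_of_int m" unfolding k_def using m1 by simp
  have xj: "\<bar>x - real_of_int j\<bar> \<le> 1/2" unfolding j_def using of_int_round_abs_le[of x] by (simp add: abs_minus_commute)
  define u where "u = 2*pi*(x - real_of_int j)/real mu"
  have "p + 2*pi*(real k - 1)/real mu = u + 2*pi*real_of_int q"
  proof -
    have "real_of_int m + real_of_int j = real mu * real_of_int q"
      using arg_cong[OF mq, of real_of_int] by simp
    then have hm: "real_of_int m = real mu * real_of_int q - real_of_int j" by simp
    show ?thesis unfolding rk hm u_def x_def using mu0 by (simp add: field_simps)
  qed
  then have cck: "cc mu p k = cos u" unfolding cc_def
    by (simp add: cos_add sin_int_2pin cos_int_2pin[unfolded mult.assoc])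
  have "u = 2*pi/real mu * (x - real_of_int j)" by (simp add: u_def)
  then have "\<bar>u\<bar> = 2*pi/real mu * \<bar>x - real_of_int j\<bar>" using mu0 by (simp add: abs_mult)
  also have "\<dots> \<le> 2*pi/real mu * (1/2)" by (rule mult_left_mono) (use xj mu0 in auto)
  also have "\<dots> = pi / real mu" by simp
  finally have "\<bar>u\<bar> \<le> pi / real mu" .
  also have "\<dots> \<le> pi / 3"
  proof -
    have "real mu \<ge> 3" using assms by simp
    then show ?thesis using pi_gt_zero by (intro divide_left_mono) auto
  qed
  finally have "\<bar>u\<bar> \<le> pi / 3" .
  then have "cos (pi/3) \<le> cos \<bar>u\<bar>" by (intro cos_monotone_0_pi_le) auto
  then have ck: "cc mu p k \<ge> 1/2" using cck cos_60 by (simp add: cos_abs_real) 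
  have "cc mu p k \<le> SS W mu p p" unfolding SS_def
    by (rule member_le_sum) (use kI ck in auto)
  then show ?thesis using ck by simp
qed


lemma cc_p0_nz:
  assumes "even mu" "mu > 0" "k \<ge> 1"
  shows "cc mu (pi / (2 * real mu)) k \<noteq> 0"
proof
  assume "cc mu (pi / (2 * real mu)) k = 0"
  then obtain i where i: "odd i" "pi / (2 * real mu) + 2 * pi * (real k - 1) / real mu = real_of_int i * (pi / 2)"
    unfolding cc_def cos_zero_iff_int by blast
  have "real_of_int (4 * (int k - 1) + 1) = real_of_int (i * int mu)"
  proof -
    have "pi * (1 + 4 * (real k - 1)) = pi * (real_of_int i * real mu)"
      using i(2) assms(2) by (simp add: field_simps)
    then have "1 + 4 * (real k - 1) = real_of_int i * real mu" using pi_gt_zero by simp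
    then show ?thesis using assms(3) by (simp add: of_nat_diff algebra_simps)
  qed
  then have "4 * (int k - 1) + 1 = i * int mu" by linarith
  moreover have "even (i * int mu)" using assms(1) by simp
  ultimately show False by (metis even_add even_mult_iff odd_one even_numeral)
qed

lemma nbhd:
  assumes "even mu" "mu > 0"
  shows "\<exists>e>0. \<forall>p. \<bar>p - pi / (2 * real mu)\<bar> < e \<longrightarrow> (\<forall>t. SS W mu p t = SS W mu (pi / (2 * real mu)) t)"
proof (cases "mu * W = 0")
  case True
  then show ?thesis by (intro exI[of _ 1]) (auto simp: SS_def)
next
  case False
  define p0 where "p0 = pi / (2 * real mu)"
  define I where "I = {2..mu*W+1}"
  define e where "e = Min ((\<lambda>k. \<bar>cc mu p0 k\<bar>) ` I)"
  have fin: "finite I" and ne: "I \<noteq> {}" using False unfolding I_def by auto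
  have epos: "e > 0" unfolding e_def using fin ne cc_p0_nz[OF assms] unfolding p0_def I_def
    by (subst Min_gr_iff) auto
  have ele: "e \<le> \<bar>cc mu p0 k\<bar>" if "k \<in> I" for k unfolding e_def using fin that by simp
  show ?thesis unfolding p0_def[symmetric]
  proof (intro exI[of _ e] conjI allI impI epos)
    fix p t assume pe: "\<bar>p - p0\<bar> < e"
    have "{k \<in> I. cc mu p k > 0} = {k \<in> I. cc mu p0 k > 0}"
    proof -
      have "cc mu p k > 0 \<longleftrightarrow> cc mu p0 k > 0" if "k \<in> I" for k
      proof -
        have "\<bar>cc mu p k - cc mu p0 k\<bar> \<le> \<bar>p - p0\<bar>" unfolding cc_def using cos_lip[of "p + 2*pi*(real k - 1)/real mu" "p0 + 2*pi*(real k - 1)/real mu"] by simp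
        then have "\<bar>cc mu p k - cc mu p0 k\<bar> < \<bar>cc mu p0 k\<bar>" using pe ele[OF that] by linarith
        then show ?thesis by (smt (verit))
      qed
      then show ?thesis by auto
    qed
    then show "SS W mu p t = SS W mu p0 t" unfolding SS_def I_def by simp
  qed
qed

lemma SS_cont: "continuous_on A (SS W mu p)"
  unfolding SS_def cc_def by (intro continuous_intros)

lemma SS_shift: "SS W mu p (t + pi) = - SS W mu p t"
  unfolding SS_def cc_def sum_negf[symmetric]
proof (rule sum.cong)
  fix k
  have "t + pi + 2 * pi * (real k - 1) / real mu = (t + 2 * pi * (real k - 1) / real mu) + pi" by simp
  then show "cos (t + pi + 2 * pi * (real k - 1) / real mu) = - cos (t + 2 * pi * (real k - 1) / real mu)"
    by (simp only: cos_periodic_pi)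
qed simp

lemma zero_ex: "\<exists>z0. pi/2 \<le> z0 \<and> z0 \<le> 3*pi/2 \<and> SS W mu p z0 = 0"
proof -
  have e: "SS W mu p (3*pi/2) = - SS W mu p (pi/2)"
    using SS_shift[of W mu p "pi/2"] by (simp add: add_divide_distrib[symmetric] field_simps)
  have le: "pi/2 \<le> 3*pi/2" using pi_gt_zero by simp
  show ?thesis
  proof (cases "SS W mu p (pi/2) \<le> 0")
    case True
    then show ?thesis using IVT'[of "SS W mu p" "pi/2" 0 "3*pi/2", OF _ _ le SS_cont] e by auto
  next
    case False
    then show ?thesis using IVT2'[of "SS W mu p" "3*pi/2" 0 "pi/2", OF _ _ le SS_cont] e by auto
  qed
qed

lemma SS_lip: "\<bar>SS W mu p t - SS W mu p s\<bar> \<le> real (mu*W) * \<bar>t - s\<bar>"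
proof -
  let ?T = "{k\<in>{2..mu*W+1}. cc mu p k > 0}"
  have "\<bar>SS W mu p t - SS W mu p s\<bar> = \<bar>\<Sum>k\<in>?T. cc mu t k - cc mu s k\<bar>"
    unfolding SS_def by (simp add: sum_subtractf)
  also have "\<dots> \<le> (\<Sum>k\<in>?T. \<bar>cc mu t k - cc mu s k\<bar>)" by (rule sum_abs)
  also have "\<dots> \<le> (\<Sum>k\<in>?T. \<bar>t - s\<bar>)" by (intro sum_mono) (simp add: cc_def cos_lip[THEN order_trans])
  also have "\<dots> = real (card ?T) * \<bar>t - s\<bar>" by simp
  also have "\<dots> \<le> real (mu*W) * \<bar>t - s\<bar>"
  proof -
    have "card ?T \<le> card {2..mu*W+1}" by (intro card_mono) auto
    then have "card ?T \<le> mu*W" by simp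
    then show ?thesis by (rule mult_right_mono[OF iffD2[OF of_nat_le_iff] abs_ge_zero])
  qed
  finally show ?thesis .
qed


lemma U_Ioo:
  assumes "0 \<le> a" "a < b" "b \<le> 2*pi"
  shows "emeasure U {a<..<b} = ennreal ((b - a) / (2*pi))"
proof -
  have "{0<..<2*pi} \<inter> {a<..<b} = {a<..<b}" using assms by auto
  then have "emeasure U {a<..<b} = emeasure lborel {a<..<b} / emeasure lborel {0<..<2*pi::real}"
    by (simp add: emeasure_uniform_measure)
  also have "\<dots> = ennreal (b - a) / ennreal (2*pi)" using assms by simp
  also have "\<dots> = ennreal ((b - a) / (2*pi))" using assms by (intro divide_ennreal) auto
  finally show ?thesis .
qed

lemma strict:
  assumes "W \<ge> 1" "even mu" "mu \<ge> 4" "z > 0"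
  shows "cdf_ps (\<lambda>\<omega>. alphaI W mu z (fst \<omega>)) (z/8) < cdf_ps (\<lambda>\<omega>. Ytil W mu z z (fst \<omega>) (snd \<omega>)) (z/8)"
proof -
  have mu0: "mu > 0" using assms by simp
  have "{p. z * (SS W mu p p)\<^sup>2 \<le> z/8} = {}"
  proof -
    have "z * (SS W mu p p)\<^sup>2 > z/8" for p
    proof -
      have "SS W mu p p \<ge> 1/2" by (rule lower[OF assms(1-3)])
      then have "(SS W mu p p)\<^sup>2 \<ge> (1/2)\<^sup>2" by (intro power_mono) auto
      then have "z * (SS W mu p p)\<^sup>2 \<ge> z * (1/4)" using assms(4) by (intro mult_left_mono) (auto simp: power2_eq_square)
      then show ?thesis using assms(4) by linarith
    qed
    then show ?thesis by (auto simp: not_le[symmetric])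
  qed
  then have A0: "cdf_ps (\<lambda>\<omega>. alphaI W mu z (fst \<omega>)) (z/8) = 0"
    unfolding cdf_alpha[OF assms(4)] by simp
  define p0 where "p0 = pi / (2 * real mu)"
  obtain e where e: "e > 0" "\<And>p t. \<bar>p - p0\<bar> < e \<Longrightarrow> SS W mu p t = SS W mu p0 t"
    using nbhd[OF assms(2) mu0, of W] unfolding p0_def[symmetric] by blast
  obtain z0 where z0: "pi/2 \<le> z0" "z0 \<le> 3*pi/2" "SS W mu p0 z0 = 0" using zero_ex by blast
  define e' where "e' = min e p0"
  define eta where "eta = min (1 / (4 * (real (mu*W) + 1))) 1"
  have p0pos: "p0 > 0" unfolding p0_def using mu0 by simp
  have p0le: "p0 \<le> pi / 2" unfolding p0_def using mu0 by (simp add: field_simps)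
  have e'pos: "e' > 0" unfolding e'_def using e p0pos by simp
  define N where "N = real (mu*W)"
  have N0: "N \<ge> 0" unfolding N_def by simp
  have "0 < 4 * (N + 1)" using N0 by simp
  then have etapos: "eta > 0" unfolding eta_def N_def[symmetric] by simp
  have eta1: "eta \<le> 1" unfolding eta_def by simp
  define R where "R = {p0-e'<..<p0+e'} \<times> {z0-eta<..<z0+eta}"
  have sub: "R \<subseteq> {\<omega>. z * (SS W mu (fst \<omega>) (snd \<omega>))\<^sup>2 \<le> z/8}"
  proof clarify
    fix a b assume "(a, b) \<in> R"
    then have ab: "\<bar>a - p0\<bar> < e" "\<bar>b - z0\<bar> < eta" unfolding R_def e'_def by auto
    have "\<bar>SS W mu a b\<bar> = \<bar>SS W mu p0 b - SS W mu p0 z0\<bar>" using e(2)[OF ab(1)] z0(3) by simp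
    also have "\<dots> \<le> N * \<bar>b - z0\<bar>" unfolding N_def by (rule SS_lip)
    also have "\<dots> \<le> N * (1 / (4 * (N + 1)))"
      using ab(2) N0 unfolding eta_def N_def[symmetric] by (intro mult_left_mono) auto
    also have "\<dots> \<le> 1/4" using N0 by (simp add: field_simps)
    finally have "\<bar>SS W mu a b\<bar> \<le> 1/4" .
    then have "(SS W mu a b)\<^sup>2 \<le> (1/4)\<^sup>2" by (metis abs_ge_zero abs_le_square_iff abs_of_nonneg order_trans power2_abs)
    then have "z * (SS W mu a b)\<^sup>2 \<le> z * (1/16)" using assms(4) by (intro mult_left_mono) (auto simp: power2_eq_square)
    then show "z * (SS W mu (fst (a, b)) (snd (a, b)))\<^sup>2 \<le> z / 8" using assms(4) by simp
  qed
  have eR: "emeasure phase_space R = ennreal ((2*e') / (2*pi)) * ennreal ((2*eta) / (2*pi))"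
  proof -
    have "emeasure U {p0-e'<..<p0+e'} = ennreal (((p0+e') - (p0-e')) / (2*pi))"
      by (rule U_Ioo) (use e'pos p0le pi_gt_zero in \<open>auto simp: e'_def\<close>)
    moreover have "emeasure U {z0-eta<..<z0+eta} = ennreal (((z0+eta) - (z0-eta)) / (2*pi))"
      by (rule U_Ioo) (use etapos eta1 z0 pi_gt3 in auto)
    ultimately show ?thesis unfolding R_def by (simp add: em_rect)
  qed
  have mR: "measure phase_space R = (2*e') / (2*pi) * ((2*eta) / (2*pi))"
    unfolding measure_def eR using e'pos etapos pi_gt_zero by (simp add: enn2real_mult)
  have "0 < measure phase_space R" unfolding mR using e'pos etapos pi_gt_zero by simp
  also have "\<dots> \<le> measure phase_space {\<omega>. z * (SS W mu (fst \<omega>) (snd \<omega>))\<^sup>2 \<le> z/8}"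
    by (rule finite_measure.finite_measure_mono[OF prob_space.axioms(1)[OF ps_prob] sub set_ps_meas])
  finally show ?thesis unfolding A0 cdf_Y[OF assms(4)] .
qed


lemma cc2: "k \<ge> 1 \<Longrightarrow> cc 2 p k = (-1)^(k-1) * cos p"
proof -
  assume k: "k \<ge> 1"
  have e: "2 * pi * (real k - 1) / real 2 = real (k - 1) * pi" using k by (simp add: of_nat_diff)
  have "cc 2 p k = cos (p + real (k - 1) * pi)" unfolding cc_def e ..
  also have "\<dots> = cos p * cos (real (k - 1) * pi) - sin p * sin (real (k - 1) * pi)" by (rule cos_add)
  also have "\<dots> = cos p * (-1)^(k-1)" by (simp only: cos_npi sin_npi mult_zero_right diff_zero)
  also have "\<dots> = (-1)^(k-1) * cos p" by (rule mult.commute)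
  finally show ?thesis .
qed

lemma SS2: "SS W 2 p t = real W * (if cos p > 0 then cos t else if cos p < 0 then - cos t else 0)"
proof (induction W)
  case 0
  then show ?case by (simp add: SS_def)
next
  case (Suc W)
  define f where "f k = (if cc 2 p k > 0 then cc 2 t k else 0)" for k
  have S: "SS n 2 p t = sum f {2..2*n+1}" for n unfolding SS_alt f_def by simp
  have "{2..2 * Suc W + 1} = insert (Suc (Suc (2*W+1))) (insert (Suc (2*W+1)) {2..2*W+1})" by auto
  then have "sum f {2..2 * Suc W + 1} = f (2*W+3) + (f (2*W+2) + sum f {2..2*W+1})"
    by (simp add: eval_nat_numeral)
  moreover have "f (2*W+3) + f (2*W+2) = (if cos p > 0 then cos t else if cos p < 0 then - cos t else 0)"
  proof -
    have a: "cc 2 q (2*W+3) = cos q" for q using cc2[of "2*W+3" q] by simp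
    have b: "cc 2 q (2*W+2) = - cos q" for q using cc2[of "2*W+2" q] by simp
    show ?thesis unfolding f_def a b by auto
  qed
  ultimately show ?case using Suc.IH unfolding S by (simp add: algebra_simps)
qed

lemma SS2_sq: "(SS W 2 t t)\<^sup>2 = (real W * cos t)\<^sup>2"
  unfolding SS2 by (auto simp: power2_eq_square)

lemma SS2_sq': "cos p \<noteq> 0 \<Longrightarrow> (SS W 2 p t)\<^sup>2 = (real W * cos t)\<^sup>2"
  unfolding SS2 by (auto simp: power2_eq_square)

lemma cos0_U: "measure U {p. cos p = 0} = 0"
proof -
  have sub: "{0<..<2*pi} \<inter> {p. cos p = 0} \<subseteq> {pi/2, 3*pi/2}"
  proof
    fix x assume "x \<in> {0<..<2*pi} \<inter> {p. cos p = 0}"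
    then obtain i where x: "0 < x" "x < 2*pi" "x = real_of_int i * pi + pi/2"
      using cos_zero_iff_int2 by auto
    have "-1 < i"
    proof (rule ccontr)
      assume "\<not> -1 < i" then have "real_of_int i \<le> -1" by simp
      then have "real_of_int i * pi \<le> -1 * pi" using pi_gt_zero by (intro mult_right_mono) auto
      then show False using x pi_gt_zero by linarith
    qed
    moreover have "i < 2"
    proof (rule ccontr)
      assume "\<not> i < 2" then have "real_of_int i \<ge> 2" by simp
      then have "real_of_int i * pi \<ge> 2 * pi" using pi_gt_zero by (intro mult_right_mono) auto
      then show False using x pi_gt_zero by linarith
    qed
    ultimately have "i = 0 \<or> i = 1" by auto
    then show "x \<in> {pi/2, 3*pi/2}" using x by auto
  qed
  have Zm: "{p. cos p = (0::real)} \<in> sets borel"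
  proof -
    have "{p \<in> space borel. cos p = (0::real)} \<in> sets borel" by measurable
    then show ?thesis by simp
  qed
  have "emeasure lborel ({0<..<2*pi} \<inter> {p. cos p = 0}) = 0"
    by (rule emeasure_lborel_countable) (rule countable_subset[OF sub], simp)
  then have "emeasure U {p. cos p = 0} = 0" using Zm by (simp add: emeasure_uniform_measure)
  then show ?thesis by (simp add: measure_def)
qed

lemma eq2:
  assumes "W \<ge> 1" "z > 0"
  shows "cdf_ps (\<lambda>\<omega>. alphaI W 2 z (fst \<omega>)) y = cdf_ps (\<lambda>\<omega>. Ytil W 2 z z (fst \<omega>) (snd \<omega>)) y"
proof (rule antisym)
  show "cdf_ps (\<lambda>\<omega>. alphaI W 2 z (fst \<omega>)) y \<le> cdf_ps (\<lambda>\<omega>. Ytil W 2 z z (fst \<omega>) (snd \<omega>)) y"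
    by (rule weak) (use assms in auto)
  have fm: "finite_measure phase_space" by (rule prob_space.axioms(1)[OF ps_prob])
  have Zm: "{p. cos p = (0::real)} \<in> sets borel"
  proof -
    have "{p \<in> space borel. cos p = (0::real)} \<in> sets borel" by measurable
    then show ?thesis by simp
  qed
  let ?B = "{\<omega>. z * (SS W 2 (fst \<omega>) (snd \<omega>))\<^sup>2 \<le> y}"
  let ?A = "UNIV \<times> {p. z * (SS W 2 p p)\<^sup>2 \<le> y}"
  let ?Z = "{p. cos p = (0::real)} \<times> (UNIV :: real set)"
  have Am: "?A \<in> sets phase_space" unfolding sets_ps using set_1_meas by (intro pair_measureI) auto
  have Zm2: "?Z \<in> sets phase_space" unfolding sets_ps using Zm by (intro pair_measureI) auto
  have sub: "?B \<subseteq> ?A \<union> ?Z"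
  proof
    fix w assume "w \<in> ?B"
    then show "w \<in> ?A \<union> ?Z" by (cases w) (auto simp: SS2_sq SS2_sq')
  qed
  have m1: "measure phase_space ?B \<le> measure phase_space (?A \<union> ?Z)"
    by (rule finite_measure.finite_measure_mono[OF fm sub]) (use Am Zm2 in auto)
  have m2: "measure phase_space (?A \<union> ?Z) \<le> measure phase_space ?A + measure phase_space ?Z"
    by (rule measure_subadditive[OF Am Zm2]) (simp_all add: finite_measure.emeasure_finite[OF fm])
  have m3: "measure phase_space ?Z = 0" using meas_fst[OF Zm] cos0_U by simp
  have "measure phase_space ?B \<le> measure phase_space ?A" using m1 m2 m3 by linarith
  then show "cdf_ps (\<lambda>\<omega>. Ytil W 2 z z (fst \<omega>) (snd \<omega>)) y \<le> cdf_ps (\<lambda>\<omega>. alphaI W 2 z (fst \<omega>)) y"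
    unfolding cdf_alpha[OF assms(2)] cdf_Y[OF assms(2)] by simp
qed

theorem corollary7:
  fixes W mu :: nat and zeta_u zeta_t :: real
  assumes "W \<ge> 1" and "even mu" and "mu \<ge> 2"
    and "zeta_u > 0" and "zeta_t = zeta_u"
  shows "(mu \<ge> 4 \<longrightarrow>
           (\<forall>y::real. cdf_ps (\<lambda>\<omega>. alphaI W mu zeta_u (fst \<omega>)) y
                       \<le> cdf_ps (\<lambda>\<omega>. Ytil W mu zeta_u zeta_t (fst \<omega>) (snd \<omega>)) y)
         \<and> (\<exists>y::real. cdf_ps (\<lambda>\<omega>. alphaI W mu zeta_u (fst \<omega>)) y
                       < cdf_ps (\<lambda>\<omega>. Ytil W mu zeta_u zeta_t (fst \<omega>) (snd \<omega>)) y))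
       \<and> (mu = 2 \<longrightarrow>
           (\<forall>y::real. cdf_ps (\<lambda>\<omega>. alphaI W mu zeta_u (fst \<omega>)) y
                       = cdf_ps (\<lambda>\<omega>. Ytil W mu zeta_u zeta_t (fst \<omega>) (snd \<omega>)) y))"
  unfolding assms(5)
proof (intro conjI impI allI)
  fix y :: real
  show "cdf_ps (\<lambda>\<omega>. alphaI W mu zeta_u (fst \<omega>)) y
      \<le> cdf_ps (\<lambda>\<omega>. Ytil W mu zeta_u zeta_u (fst \<omega>) (snd \<omega>)) y"
    by (rule weak[OF assms(1-4)])
next
  assume "mu \<ge> 4"
  then show "\<exists>y::real. cdf_ps (\<lambda>\<omega>. alphaI W mu zeta_u (fst \<omega>)) y
      < cdf_ps (\<lambda>\<omega>. Ytil W mu zeta_u zeta_u (fst \<omega>) (snd \<omega>)) y"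
    using strict[OF assms(1,2) _ assms(4)] by blast
next
  fix y :: real
  assume "mu = 2"
  then show "cdf_ps (\<lambda>\<omega>. alphaI W mu zeta_u (fst \<omega>)) y
      = cdf_ps (\<lambda>\<omega>. Ytil W mu zeta_u zeta_u (fst \<omega>) (snd \<omega>)) y"
    using eq2[OF assms(1,4)] by simp
qed

end
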